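(* Let $(Y,d)$ be a locally compact Hadamard space, $\Lambda$ a group acting properly and co-compactly by isometries on $Y$, and $y\in Y$ a reference point. Then for any conjugate finite lists $(a_i)_{1\le i\le N}$, $(b_i)_{1\le i\le N}$ in $\Lambda$ there exists $g\in\Lambda$ with $b_i=g^{-1}a_ig$ for all $i$ such that $$d_y(g,e)\leqslant C_\star\sum_{i=1}^N\big(d_y(a_i,e)+d_y(b_i,e)\big)+C,$$ where $d_y(g,h)=d(g\cdot y,h\cdot y)$ and the constants $C_\star,C$ depend only on the conjugacy class of the list $(a_i)$ (and on $y$).
   Context: A Hadamard space is a complete metric space $(Y,d)$ such that any two points are joined by a curve whose length equals their distance (a geodesic), and for any points $P,Q,R$ and $0\le\lambda\le1$, the point $Q_\lambda$ on the geodesic from $Q$ to $R$ with $d(Q_\lambda,Q)=\lambda d(Q,R)$ satisfies $d(P,Q_\lambda)^2\le(1-\lambda)d(P,Q)^2+\lambda d(P,R)^2-\lambda(1-\lambda)d(Q,R)^2$. Proper action: each $y$ has $r>0$ with $\{g: gB(y,r)\cap B(y,r)\ne\varnothing\}$ finite; co-compact: $Y/\Lambda$ compact. Lists are conjugate if some $g\in\Lambda$ satisfies $b_i=g^{-1}a_ig$ for all $i$. *)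

theory Defs
  imports "HOL-Analysis.Analysis" "HOL-Algebra.Group"
begin

definition geodesic_path :: "(real \<Rightarrow> 'a::metric_space) \<Rightarrow> 'a \<Rightarrow> 'a \<Rightarrow> bool" where
  "geodesic_path \<gamma> x y \<longleftrightarrow> \<gamma> 0 = x \<and> \<gamma> (dist x y) = y \<and>
     (\<forall>s\<in>{0..dist x y}. \<forall>t\<in>{0..dist x y}. dist (\<gamma> s) (\<gamma> t) = \<bar>s - t\<bar>)"

definition hadamard_space :: "'a::metric_space itself \<Rightarrow> bool" where
  "hadamard_space _ \<longleftrightarrow>
     complete (UNIV :: 'a set) \<and>
     (\<forall>x y :: 'a. \<exists>\<gamma>. geodesic_path \<gamma> x y) \<and>
     (\<forall>(P::'a) Q R \<gamma> (t::real). geodesic_path \<gamma> Q R \<and> 0 \<le> t \<and> t \<le> 1 \<longrightarrow>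
        (dist P (\<gamma> (t * dist Q R)))\<^sup>2
          \<le> (1 - t) * (dist P Q)\<^sup>2 + t * (dist P R)\<^sup>2 - t * (1 - t) * (dist Q R)\<^sup>2)"

definition isometric_action :: "('g, 'b) monoid_scheme \<Rightarrow> ('g \<Rightarrow> 'a::metric_space \<Rightarrow> 'a) \<Rightarrow> bool" where
  "isometric_action G \<phi> \<longleftrightarrow>
     \<phi> \<one>\<^bsub>G\<^esub> = id \<and>
     (\<forall>g\<in>carrier G. \<forall>h\<in>carrier G. \<phi> (g \<otimes>\<^bsub>G\<^esub> h) = \<phi> g \<circ> \<phi> h) \<and>
     (\<forall>g\<in>carrier G. \<forall>x y. dist (\<phi> g x) (\<phi> g y) = dist x y)"

definition proper_action :: "('g, 'b) monoid_scheme \<Rightarrow> ('g \<Rightarrow> 'a::metric_space \<Rightarrow> 'a) \<Rightarrow> bool" where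
  "proper_action G \<phi> \<longleftrightarrow>
     (\<forall>y. \<exists>r>0. finite {g \<in> carrier G. \<phi> g ` ball y r \<inter> ball y r \<noteq> {}})"

text \<open>Y/\<Lambda> compact: every cover of Y by \<Lambda>-invariant open sets (= preimages of
  open sets of the quotient) has a finite subcover.\<close>
definition cocompact_action :: "('g, 'b) monoid_scheme \<Rightarrow> ('g \<Rightarrow> 'a::topological_space \<Rightarrow> 'a) \<Rightarrow> bool" where
  "cocompact_action G \<phi> \<longleftrightarrow>
     (\<forall>\<U>. (\<forall>U\<in>\<U>. open U \<and> (\<forall>g\<in>carrier G. \<phi> g ` U \<subseteq> U)) \<and> \<Union>\<U> = UNIV \<longrightarrow>
        (\<exists>\<V>\<subseteq>\<U>. finite \<V> \<and> \<Union>\<V> = UNIV))"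

definition conj_by :: "('g, 'b) monoid_scheme \<Rightarrow> 'g \<Rightarrow> 'g list \<Rightarrow> 'g list \<Rightarrow> bool" where
  "conj_by G g a b \<longleftrightarrow> length a = length b \<and>
     (\<forall>i<length a. b ! i = inv\<^bsub>G\<^esub> g \<otimes>\<^bsub>G\<^esub> a ! i \<otimes>\<^bsub>G\<^esub> g)"

definition conj_lists :: "('g, 'b) monoid_scheme \<Rightarrow> 'g list \<Rightarrow> 'g list \<Rightarrow> bool" where
  "conj_lists G a b \<longleftrightarrow> set a \<subseteq> carrier G \<and> set b \<subseteq> carrier G \<and>
     (\<exists>g\<in>carrier G. conj_by G g a b)"

definition orbit_dist :: "('g \<Rightarrow> 'a::metric_space \<Rightarrow> 'a) \<Rightarrow> 'a \<Rightarrow> 'g \<Rightarrow> 'g \<Rightarrow> real" where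
  "orbit_dist \<phi> y g h = dist (\<phi> g y) (\<phi> h y)"

end

theory Submission
  imports Defs
begin


lemma geo_dist:
  assumes "geodesic_path \<gamma> x y" "s \<in> {0..dist x y}" "t \<in> {0..dist x y}"
  shows "dist (\<gamma> s) (\<gamma> t) = \<bar>s - t\<bar>"
  using assms unfolding geodesic_path_def by blast

lemma geo_rev:
  assumes "geodesic_path \<gamma> x y"
  shows "geodesic_path (\<lambda>s. \<gamma> (dist x y - s)) y x"
proof -
  have "\<gamma> 0 = x" "\<gamma> (dist x y) = y" using assms unfolding geodesic_path_def by auto
  moreover have "dist (\<gamma> (dist x y - s)) (\<gamma> (dist x y - t)) = \<bar>s - t\<bar>"
    if "s \<in> {0..dist x y}" "t \<in> {0..dist x y}" for s t
    using geo_dist[OF assms, of "dist x y - s" "dist x y - t"] that by auto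
  ultimately show ?thesis unfolding geodesic_path_def by (simp add: dist_commute)
qed

lemma cn:
  assumes "hadamard_space TYPE('a::metric_space)" "geodesic_path \<gamma> (Q::'a) R" "0 \<le> t" "t \<le> 1"
  shows "(dist P (\<gamma> (t * dist Q R)))\<^sup>2
          \<le> (1 - t) * (dist P Q)\<^sup>2 + t * (dist P R)\<^sup>2 - t * (1 - t) * (dist Q R)\<^sup>2"
  using assms unfolding hadamard_space_def by blast

lemma common_start:
  assumes H: "hadamard_space TYPE('a::metric_space)"
    and g: "geodesic_path \<gamma> (Z0::'a) A" and s: "geodesic_path \<sigma> Z0 B" and t: "0 \<le> t" "t \<le> 1"
  shows "dist (\<gamma> (t * dist Z0 A)) (\<sigma> (t * dist Z0 B)) \<le> t * dist A B"
proof -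
  define At where "At = \<gamma> (t * dist Z0 A)"
  define Bt where "Bt = \<sigma> (t * dist Z0 B)"
  have "\<gamma> 0 = Z0" using g unfolding geodesic_path_def by auto
  have dAt: "dist At Z0 = t * dist Z0 A"
  proof -
    have "dist At Z0 = dist (\<gamma> (t * dist Z0 A)) (\<gamma> 0)" using \<open>\<gamma> 0 = Z0\<close> At_def by simp
    also have "\<dots> = \<bar>t * dist Z0 A - 0\<bar>"
      by (rule geo_dist[OF g]) (use t in \<open>auto intro: mult_left_le_one_le\<close>)
    finally show ?thesis using t by simp
  qed
  have c1: "(dist At Bt)\<^sup>2 \<le> (1 - t) * (dist At Z0)\<^sup>2 + t * (dist At B)\<^sup>2 - t * (1 - t) * (dist Z0 B)\<^sup>2"
    unfolding Bt_def by (rule cn[OF H s t])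
  have c2: "(dist B At)\<^sup>2 \<le> (1 - t) * (dist B Z0)\<^sup>2 + t * (dist B A)\<^sup>2 - t * (1 - t) * (dist Z0 A)\<^sup>2"
    unfolding At_def by (rule cn[OF H g t])
  have "(dist At Bt)\<^sup>2 \<le> (t * dist A B)\<^sup>2"
  proof -
    have "t * (dist At B)\<^sup>2 \<le> t * ((1 - t) * (dist B Z0)\<^sup>2 + t * (dist B A)\<^sup>2 - t * (1 - t) * (dist Z0 A)\<^sup>2)"
      using c2 t by (simp add: dist_commute mult_left_mono)
    then show ?thesis using c1 dAt
      by (simp add: dist_commute power2_eq_square algebra_simps)
  qed
  then have "dist At Bt \<le> t * dist A B"
    by (rule power2_le_imp_le) (use t in auto)
  then show ?thesis unfolding At_def Bt_def .
qed

lemma two_geo: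
  assumes H: "hadamard_space TYPE('a::metric_space)"
    and g: "geodesic_path \<gamma> (A::'a) B" and d: "geodesic_path \<delta> A' B'" and t: "0 \<le> t" "t \<le> 1"
  shows "dist (\<gamma> (t * dist A B)) (\<delta> (t * dist A' B')) \<le> (1 - t) * dist A A' + t * dist B B'"
proof -
  obtain \<sigma> where s: "geodesic_path \<sigma> A B'" using H unfolding hadamard_space_def by blast
  have 1: "dist (\<gamma> (t * dist A B)) (\<sigma> (t * dist A B')) \<le> t * dist B B'"
    by (rule common_start[OF H g s t])
  have 2: "dist ((\<lambda>s. \<sigma> (dist A B' - s)) ((1 - t) * dist B' A)) ((\<lambda>s. \<delta> (dist A' B' - s)) ((1 - t) * dist B' A'))
      \<le> (1 - t) * dist A A'"
    by (rule common_start[OF H geo_rev[OF s] geo_rev[OF d]]) (use t in auto)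
  have e1: "dist A B' - (1 - t) * dist B' A = t * dist A B'" by (simp add: dist_commute algebra_simps)
  have e2: "dist A' B' - (1 - t) * dist B' A' = t * dist A' B'" by (simp add: dist_commute algebra_simps)
  have "dist (\<sigma> (t * dist A B')) (\<delta> (t * dist A' B')) \<le> (1 - t) * dist A A'"
    using 2 unfolding e1 e2 by simp
  with 1 show ?thesis using dist_triangle[of "\<gamma> (t * dist A B)" "\<delta> (t * dist A' B')" "\<sigma> (t * dist A B')"]
    by linarith
qed



locale act = group G for G :: "('g, 'b) monoid_scheme" (structure) +
  fixes \<phi> :: "'g \<Rightarrow> 'a::metric_space \<Rightarrow> 'a"
  assumes iso: "isometric_action G \<phi>"
begin

lemma phi_one[simp]: "\<phi> \<one> x = x"
  using iso unfolding isometric_action_def by simp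

lemma phi_mult: "g \<in> carrier G \<Longrightarrow> h \<in> carrier G \<Longrightarrow> \<phi> (g \<otimes> h) x = \<phi> g (\<phi> h x)"
  using iso unfolding isometric_action_def by simp

lemma phi_dist[simp]: "g \<in> carrier G \<Longrightarrow> dist (\<phi> g x) (\<phi> g x') = dist x x'"
  using iso unfolding isometric_action_def by simp

lemma phi_inv1[simp]: "g \<in> carrier G \<Longrightarrow> \<phi> (inv g) (\<phi> g x) = x"
  by (metis inv_closed l_inv phi_mult phi_one)

lemma phi_inv2[simp]: "g \<in> carrier G \<Longrightarrow> \<phi> g (\<phi> (inv g) x) = x"
  by (metis inv_closed r_inv phi_mult phi_one)

lemma phi_cont: "g \<in> carrier G \<Longrightarrow> continuous_on S (\<phi> g)"
  unfolding continuous_on_iff by (metis phi_dist)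

lemma phi_open: "g \<in> carrier G \<Longrightarrow> open U \<Longrightarrow> open (\<phi> g ` U)"
proof -
  assume g: "g \<in> carrier G" and U: "open U"
  have "\<phi> g ` U = \<phi> (inv g) -` U"
    using g by (auto, metis phi_inv1 image_eqI phi_inv2)
  moreover have "continuous_on UNIV (\<phi> (inv g))" using g by (intro phi_cont) simp
  ultimately show ?thesis using U by (simp add: open_vimage)
qed

definition orb :: "'a set \<Rightarrow> 'a set" where
  "orb U = (\<Union>g\<in>carrier G. \<phi> g ` U)"

lemma orb_open: "open U \<Longrightarrow> open (orb U)"
  unfolding orb_def by (intro open_UN ballI phi_open)

lemma orb_inv: "g \<in> carrier G \<Longrightarrow> \<phi> g ` orb U \<subseteq> orb U"
  unfolding orb_def by (auto simp: phi_mult[symmetric] intro!: bexI[where x="g \<otimes> _"])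

lemma cocompact_finite:
  assumes cc: "cocompact_action G \<phi>" and op: "\<And>x. open (W x)" and cov: "\<And>x. x \<in> W x"
  shows "\<exists>X. finite X \<and> (\<forall>p. \<exists>x\<in>X. \<exists>g\<in>carrier G. p \<in> \<phi> g ` W x)"
proof -
  let ?U = "(\<lambda>x. orb (W x)) ` UNIV"
  have "\<forall>U\<in>?U. open U \<and> (\<forall>g\<in>carrier G. \<phi> g ` U \<subseteq> U)"
    using op orb_open orb_inv by auto
  moreover have "\<Union>?U = UNIV"
  proof -
    have "p \<in> orb (W p)" for p unfolding orb_def using cov[of p] by (auto intro!: bexI[where x=\<one>])
    then show ?thesis by auto
  qed
  ultimately obtain V where V: "V \<subseteq> ?U" "finite V" "\<Union>V = UNIV"
    using cc unfolding cocompact_action_def by meson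
  then obtain X where X: "finite X" "V = (\<lambda>x. orb (W x)) ` X"
    by (meson finite_subset_image)
  show ?thesis
  proof (intro exI conjI allI)
    show "finite X" by fact
    fix p
    have "p \<in> \<Union>V" using V by auto
    then obtain x where "x \<in> X" "p \<in> orb (W x)" using X by auto
    then show "\<exists>x\<in>X. \<exists>g\<in>carrier G. p \<in> \<phi> g ` W x" unfolding orb_def by auto
  qed
qed

end


context act begin

lemma frac_in: "0 \<le> (L::real) \<Longrightarrow> j \<le> N \<Longrightarrow> 0 < N \<Longrightarrow> real j * L / real N \<in> {0..L}"
proof -
  assume a: "0 \<le> L" "j \<le> N" "0 < N"
  have "real j * L \<le> real N * L" using a by (intro mult_right_mono) auto
  then show ?thesis using a by (auto simp: divide_le_eq mult.commute)
qed

fun prods :: "'g set \<Rightarrow> nat \<Rightarrow> 'g set" where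
  "prods T 0 = {\<one>}"
| "prods T (Suc k) = (\<lambda>(w, s). w \<otimes> s) ` (prods T k \<times> T)"

lemma prods_finite: "finite T \<Longrightarrow> finite (prods T k)"
  by (induction k) auto

lemma prods_carrier: "T \<subseteq> carrier G \<Longrightarrow> prods T k \<subseteq> carrier G"
  by (induction k) auto

lemma Tpair_finite:
  assumes fin: "finite {g \<in> carrier G. \<phi> g ` ball x r \<inter> ball x r \<noteq> {}}"
    and c: "c \<le> r"
  shows "finite {s \<in> carrier G. dist (\<phi> s x') x < c}"
proof (cases "{s \<in> carrier G. dist (\<phi> s x') x < c} = {}")
  case True then show ?thesis by (metis finite.emptyI)
next
  case False
  then obtain s0 where s0: "s0 \<in> carrier G" "dist (\<phi> s0 x') x < c" by auto
  have "{s \<in> carrier G. dist (\<phi> s x') x < c} \<subseteq> (\<lambda>t. t \<otimes> s0) ` {g \<in> carrier G. \<phi> g ` ball x r \<inter> ball x r \<noteq> {}}"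
  proof
    fix s assume s: "s \<in> {s \<in> carrier G. dist (\<phi> s x') x < c}"
    have sc: "s \<in> carrier G" using s by auto
    have "\<phi> (s \<otimes> inv s0) (\<phi> s0 x') = \<phi> s x'"
      using sc s0 by (simp add: phi_mult)
    moreover have "\<phi> s0 x' \<in> ball x r" "\<phi> s x' \<in> ball x r" using s s0 c by (auto simp: dist_commute)
    ultimately have "\<phi> s x' \<in> \<phi> (s \<otimes> inv s0) ` ball x r \<inter> ball x r" by (metis IntI image_eqI)
    then have "s \<otimes> inv s0 \<in> {g \<in> carrier G. \<phi> g ` ball x r \<inter> ball x r \<noteq> {}}"
      using sc s0 by auto
    moreover have "s = (s \<otimes> inv s0) \<otimes> s0" using sc s0 by (simp add: m_assoc)
    ultimately show "s \<in> (\<lambda>t. t \<otimes> s0) ` {g \<in> carrier G. \<phi> g ` ball x r \<inter> ball x r \<noteq> {}}" by blast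
  qed
  then show ?thesis using fin finite_subset by blast
qed

lemma P1:
  assumes H: "hadamard_space TYPE('a)" and pr: "proper_action G \<phi>" and cc: "cocompact_action G \<phi>"
  shows "finite {g \<in> carrier G. dist (\<phi> g y) y \<le> R}"
proof -
  define Pr where "Pr x r = {g \<in> carrier G. \<phi> g ` ball x r \<inter> ball x r \<noteq> {}}" for x r
  have "\<forall>x. \<exists>r>0. finite (Pr x r)" using pr unfolding proper_action_def Pr_def by blast
  then obtain \<rho> where \<rho>: "\<And>x. \<rho> x > 0" "\<And>x. finite (Pr x (\<rho> x))" by metis
  obtain X where X: "finite X" "\<And>p. \<exists>x\<in>X. \<exists>g\<in>carrier G. p \<in> \<phi> g ` ball x (\<rho> x / 4)"
    using cocompact_finite[OF cc, of "\<lambda>x. ball x (\<rho> x / 4)"] \<rho> by auto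
  have Xne: "X \<noteq> {}" using X(2) by blast
  define \<epsilon> where "\<epsilon> = Min (\<rho> ` X) / 4"
  have \<epsilon>pos: "\<epsilon> > 0" unfolding \<epsilon>_def using X(1) Xne \<rho> by simp
  have \<epsilon>le: "\<epsilon> \<le> \<rho> x / 4" if "x \<in> X" for x unfolding \<epsilon>_def using X(1) that by simp
  have "\<forall>p. \<exists>x h. x \<in> X \<and> h \<in> carrier G \<and> dist x (\<phi> (inv h) p) < \<rho> x / 4"
  proof
    fix p
    obtain x g where "x \<in> X" "g \<in> carrier G" "p \<in> \<phi> g ` ball x (\<rho> x / 4)" using X(2) by blast
    then show "\<exists>x h. x \<in> X \<and> h \<in> carrier G \<and> dist x (\<phi> (inv h) p) < \<rho> x / 4"
      by (auto intro!: exI[where x=x] exI[where x=g])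
  qed
  then obtain xp hp where xh: "\<And>p. xp p \<in> X" "\<And>p. hp p \<in> carrier G"
      "\<And>p. dist (xp p) (\<phi> (inv (hp p)) p) < \<rho> (xp p) / 4" by metis
  define T where "T = {s \<in> carrier G. \<exists>x\<in>X. \<exists>x'\<in>X. dist (\<phi> s x') x < \<rho> x / 4 + \<rho> x' / 4 + \<epsilon>}"
  have Tc: "T \<subseteq> carrier G" unfolding T_def by auto
  have Tfin: "finite T"
  proof -
    have "T \<subseteq> (\<Union>x\<in>X. \<Union>x'\<in>X. {s \<in> carrier G. dist (\<phi> s x') x < \<rho> x / 4 + \<rho> x' / 4 + \<epsilon>})"
      unfolding T_def by blast
    moreover have "finite {s \<in> carrier G. dist (\<phi> s x') x < \<rho> x / 4 + \<rho> x' / 4 + \<epsilon>}"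
      if "x \<in> X" "x' \<in> X" for x x'
    proof (cases "\<rho> x' \<le> \<rho> x")
      case True
      have "\<rho> x / 4 + \<rho> x' / 4 + \<epsilon> \<le> \<rho> x" using True \<epsilon>le[OF that(1)] \<rho>(1)[of x] by linarith
      then show ?thesis using Tpair_finite[OF \<rho>(2)[of x, unfolded Pr_def]] by blast
    next
      case False
      let ?c = "\<rho> x / 4 + \<rho> x' / 4 + \<epsilon>"
      have "?c \<le> \<rho> x'" using False \<epsilon>le[OF that(1)] \<rho>(1)[of x] by linarith
      then have f: "finite {s \<in> carrier G. dist (\<phi> s x) x' < ?c}"
        using Tpair_finite[OF \<rho>(2)[of x', unfolded Pr_def]] by blast
      have "{s \<in> carrier G. dist (\<phi> s x') x < ?c} \<subseteq> (\<lambda>t. inv t) ` {s \<in> carrier G. dist (\<phi> s x) x' < ?c}"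
      proof
        fix s assume s: "s \<in> {s \<in> carrier G. dist (\<phi> s x') x < ?c}"
        then have sc: "s \<in> carrier G" by auto
        have "dist (\<phi> (inv s) x) x' = dist (\<phi> s x') x"
          using phi_dist[of s "\<phi> (inv s) x" x'] sc by (simp add: dist_commute)
        then have "inv s \<in> {s \<in> carrier G. dist (\<phi> s x) x' < ?c}" using s sc by auto
        then show "s \<in> (\<lambda>t. inv t) ` {s \<in> carrier G. dist (\<phi> s x) x' < ?c}"
          using sc by (metis (no_types, lifting) image_eqI inv_inv)
      qed
      then show ?thesis using f finite_subset by blast
    qed
    ultimately show ?thesis using X(1) by (meson finite_UN_I finite_subset)
  qed
  define N where "N = nat \<lceil>R / \<epsilon>\<rceil> + 1"
  define h0 where "h0 = hp y"
  have h0c: "h0 \<in> carrier G" using xh h0_def by simp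
  have "{g \<in> carrier G. dist (\<phi> g y) y \<le> R} \<subseteq> (\<lambda>w. h0 \<otimes> w \<otimes> inv h0) ` prods T N"
  proof
    fix g assume "g \<in> {g \<in> carrier G. dist (\<phi> g y) y \<le> R}"
    then have gc: "g \<in> carrier G" and gR: "dist (\<phi> g y) y \<le> R" by auto
    obtain \<gamma> where \<gamma>: "geodesic_path \<gamma> y (\<phi> g y)" using H unfolding hadamard_space_def by blast
    define L where "L = dist y (\<phi> g y)"
    have L0: "L \<ge> 0" unfolding L_def by simp
    have Npos: "N > 0" unfolding N_def by simp
    have LN: "L / N \<le> \<epsilon>"
    proof -
      have "R / \<epsilon> \<le> real N" unfolding N_def by linarith
      then have "R \<le> \<epsilon> * N" using \<epsilon>pos by (simp add: field_simps)
      then have "L \<le> \<epsilon> * N" using gR L_def by (simp add: dist_commute)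
      then show ?thesis using Npos by (simp add: field_simps)
    qed
    define p where "p k = \<gamma> (real k * L / N)" for k
    define H where "H k = (if k = N then g \<otimes> h0 else hp (p k))" for k
    define xx where "xx k = (if k = N then xp y else xp (p k))" for k
    have p0: "p 0 = y" using \<gamma> unfolding p_def geodesic_path_def by simp
    have pN: "p N = \<phi> g y" using \<gamma> Npos unfolding p_def geodesic_path_def L_def by simp
    have Hc: "H k \<in> carrier G" for k using xh gc h0c unfolding H_def by auto
    have H0: "H 0 = h0" using Npos p0 unfolding H_def h0_def by simp
    have xxX: "xx k \<in> X" for k unfolding xx_def using xh by auto
    have near: "dist (xx k) (\<phi> (inv (H k)) (p k)) < \<rho> (xx k) / 4" if "k \<le> N" for k
    proof (cases "k = N")
      case True
      have "\<phi> (inv (g \<otimes> h0)) (p N) = \<phi> (inv h0) y"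
        using gc h0c pN by (simp add: inv_mult_group phi_mult)
      then show ?thesis using True xh(3)[of y] unfolding H_def xx_def h0_def by simp
    next
      case False
      then show ?thesis using xh(3)[of "p k"] unfolding H_def xx_def by simp
    qed
    have step: "dist (p k) (p (Suc k)) \<le> \<epsilon>" if "k < N" for k
    proof -
      have a: "real k * L / N \<in> {0..L}" "real (Suc k) * L / N \<in> {0..L}"
        using that L0 Npos frac_in[of L k N] frac_in[of L "Suc k" N] by auto
      have "dist (p k) (p (Suc k)) = \<bar>real k * L / N - real (Suc k) * L / N\<bar>"
        unfolding p_def using geo_dist[OF \<gamma>] a L_def by simp
      also have "\<dots> = L / N" using L0 by (simp add: diff_divide_distrib[symmetric] algebra_simps)
      finally show ?thesis using LN by simp
    qed
    have inT: "inv (H k) \<otimes> H (Suc k) \<in> T" if "k < N" for k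
    proof -
      let ?s = "inv (H k) \<otimes> H (Suc k)"
      have sc: "?s \<in> carrier G" using Hc by simp
      have e: "\<phi> ?s (\<phi> (inv (H (Suc k))) (p (Suc k))) = \<phi> (inv (H k)) (p (Suc k))"
        using Hc by (simp add: phi_mult)
      have d1: "dist (\<phi> ?s (xx (Suc k))) (\<phi> ?s (\<phi> (inv (H (Suc k))) (p (Suc k)))) < \<rho> (xx (Suc k)) / 4"
        using near[of "Suc k"] that sc by simp
      have d2: "dist (\<phi> (inv (H k)) (p (Suc k))) (\<phi> (inv (H k)) (p k)) \<le> \<epsilon>"
        using step[OF that] Hc by (simp add: dist_commute)
      have d3: "dist (\<phi> (inv (H k)) (p k)) (xx k) < \<rho> (xx k) / 4"
        using near[of k] that by (simp add: dist_commute)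
      have "dist (\<phi> ?s (xx (Suc k))) (xx k) < \<rho> (xx k) / 4 + \<rho> (xx (Suc k)) / 4 + \<epsilon>"
        using d1[unfolded e] d2 d3 dist_triangle[of "\<phi> ?s (xx (Suc k))" "xx k" "\<phi> (inv (H k)) (p (Suc k))"]
          dist_triangle[of "\<phi> (inv (H k)) (p (Suc k))" "xx k" "\<phi> (inv (H k)) (p k)"]
        by linarith
      then show ?thesis unfolding T_def using sc xxX by blast
    qed
    have ind: "k \<le> N \<Longrightarrow> \<exists>w\<in>prods T k. H k = h0 \<otimes> w" for k
    proof (induction k)
      case 0 then show ?case using H0 h0c by simp
    next
      case (Suc k)
      then obtain w where w: "w \<in> prods T k" "H k = h0 \<otimes> w" by auto
      have wc: "w \<in> carrier G" using w prods_carrier[OF Tc] by auto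
      let ?s = "inv (H k) \<otimes> H (Suc k)"
      have sT: "?s \<in> T" using inT Suc by simp
      have "H (Suc k) = H k \<otimes> ?s" using Hc by (simp add: m_assoc[symmetric])
      also have "\<dots> = h0 \<otimes> (w \<otimes> ?s)" using w h0c wc Hc by (simp add: m_assoc)
      finally show ?case using w sT by force
    qed
    obtain w where w: "w \<in> prods T N" "g \<otimes> h0 = h0 \<otimes> w" using ind[of N] unfolding H_def by auto
    have wc: "w \<in> carrier G" using w prods_carrier[OF Tc] by auto
    have "g = h0 \<otimes> w \<otimes> inv h0" using w gc h0c wc
      by (metis inv_solve_right m_closed)
    then show "g \<in> (\<lambda>w. h0 \<otimes> w \<otimes> inv h0) ` prods T N" using w by blast
  qed
  then show ?thesis using prods_finite[OF Tfin] finite_subset by blast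
qed

end


lemma near_point:
  fixes x :: "'a::metric_space"
  assumes "A \<noteq> {}" "e > 0"
  shows "\<exists>a\<in>A. dist x a < infdist x A + e"
proof -
  have "(INF a\<in>A. dist x a) < infdist x A + e" using infdist_notempty[OF assms(1)] assms(2) by simp
  then show ?thesis using assms(1) by (subst (asm) cINF_less_iff) (auto intro: bdd_belowI2[where m=0])
qed

locale hsetup = act G \<phi> for G :: "('g, 'b) monoid_scheme" (structure) and \<phi> :: "'g \<Rightarrow> 'a::metric_space \<Rightarrow> 'a" +
  fixes a0 :: "'g list"
  assumes H: "hadamard_space TYPE('a)"
    and lc: "locally_compact_space (euclidean :: 'a topology)"
    and pr: "proper_action G \<phi>"
    and cc: "cocompact_action G \<phi>"
    and a0c: "set a0 \<subseteq> carrier G"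
begin

definition F :: "'a \<Rightarrow> real" where
  "F x = (\<Sum>i<length a0. dist (\<phi> (a0 ! i) x) x)"

definition Z :: "'g set" where
  "Z = {z \<in> carrier G. \<forall>i<length a0. z \<otimes> a0 ! i = a0 ! i \<otimes> z}"

lemma a0i: "i < length a0 \<Longrightarrow> a0 ! i \<in> carrier G"
  using a0c nth_mem by blast

lemma F_nonneg: "F x \<ge> 0"
  unfolding F_def by (simp add: sum_nonneg)

lemma F_Z: assumes "z \<in> Z" shows "F (\<phi> z x) = F x"
proof -
  have zc: "z \<in> carrier G" using assms Z_def by auto
  have "dist (\<phi> (a0 ! i) (\<phi> z x)) (\<phi> z x) = dist (\<phi> (a0 ! i) x) x" if "i < length a0" for i
  proof -
    have "\<phi> (a0 ! i) (\<phi> z x) = \<phi> z (\<phi> (a0 ! i) x)"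
      using assms that a0i[OF that] zc unfolding Z_def by (metis (mono_tags, lifting) mem_Collect_eq phi_mult)
    then show ?thesis using zc by simp
  qed
  then show ?thesis unfolding F_def by simp
qed

lemma F_lip: "F x \<le> F x' + 2 * length a0 * dist x x'"
proof -
  have "dist (\<phi> (a0 ! i) x) x \<le> dist (\<phi> (a0 ! i) x') x' + 2 * dist x x'" if "i < length a0" for i
  proof -
    have "dist (\<phi> (a0 ! i) x) (\<phi> (a0 ! i) x') = dist x x'" using a0i[OF that] by simp
    then show ?thesis
      using dist_triangle[of "\<phi> (a0 ! i) x" x "\<phi> (a0 ! i) x'"] dist_triangle[of "\<phi> (a0 ! i) x'" x x']
      by (simp add: dist_commute)
  qed
  then have "F x \<le> (\<Sum>i<length a0. dist (\<phi> (a0 ! i) x') x' + 2 * dist x x')"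
    unfolding F_def by (intro sum_mono) auto
  also have "\<dots> = F x' + 2 * length a0 * dist x x'"
    unfolding F_def by (simp add: sum.distrib)
  finally show ?thesis .
qed

lemma F_cont: "continuous_on S F"
  unfolding F_def
  by (intro continuous_on_sum continuous_on_dist continuous_on_id phi_cont a0i) auto

lemma F_conv:
  assumes g: "geodesic_path \<gamma> q p" and t: "0 \<le> t" "t \<le> 1"
  shows "F (\<gamma> (t * dist q p)) \<le> (1 - t) * F q + t * F p"
proof -
  have "dist (\<phi> (a0 ! i) (\<gamma> (t * dist q p))) (\<gamma> (t * dist q p))
     \<le> (1 - t) * dist (\<phi> (a0 ! i) q) q + t * dist (\<phi> (a0 ! i) p) p" if "i < length a0" for i
  proof -
    have ac: "a0 ! i \<in> carrier G" using a0i[OF that] .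
    have "geodesic_path (\<phi> (a0 ! i) \<circ> \<gamma>) (\<phi> (a0 ! i) q) (\<phi> (a0 ! i) p)"
      using g ac unfolding geodesic_path_def by auto
    from two_geo[OF H this g t] ac show ?thesis by simp
  qed
  then have "F (\<gamma> (t * dist q p)) \<le> (\<Sum>i<length a0. (1 - t) * dist (\<phi> (a0 ! i) q) q + t * dist (\<phi> (a0 ! i) p) p)"
    unfolding F_def by (intro sum_mono) auto
  also have "\<dots> = (1 - t) * F q + t * F p"
    unfolding F_def by (simp add: sum.distrib sum_distrib_left)
  finally show ?thesis .
qed

lemma F_orbit: assumes "h \<in> carrier G"
  shows "F (\<phi> h y) = (\<Sum>i<length a0. dist (\<phi> (inv h \<otimes> a0 ! i \<otimes> h) y) y)"
proof -
  have "dist (\<phi> (a0 ! i) (\<phi> h y)) (\<phi> h y) = dist (\<phi> (inv h \<otimes> a0 ! i \<otimes> h) y) y" if "i < length a0" for i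
  proof -
    have ac: "a0 ! i \<in> carrier G" using a0i[OF that] .
    have "\<phi> (inv h \<otimes> a0 ! i \<otimes> h) y = \<phi> (inv h) (\<phi> (a0 ! i) (\<phi> h y))"
      using ac assms by (simp add: phi_mult)
    then show ?thesis using assms ac phi_dist[of h "\<phi> (inv h) (\<phi> (a0 ! i) (\<phi> h y))" y] by simp
  qed
  then show ?thesis unfolding F_def by simp
qed

lemma compact_K: "\<exists>K. compact K \<and> (\<forall>p. \<exists>g\<in>carrier G. \<exists>k\<in>K. p = \<phi> g k)"
proof -
  have "\<forall>x::'a. \<exists>U K. open U \<and> compact K \<and> x \<in> U \<and> U \<subseteq> K"
  proof
    fix x :: 'a
    have "x \<in> topspace euclidean" by simp
    then obtain U K where "openin euclidean U" "compactin euclidean K" "x \<in> U" "U \<subseteq> K"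
      using lc unfolding locally_compact_space_def by blast
    then show "\<exists>U K. open U \<and> compact K \<and> x \<in> U \<and> U \<subseteq> K" by auto
  qed
  then have "\<forall>x::'a. \<exists>p. open (fst p) \<and> compact (snd p) \<and> x \<in> fst p \<and> fst p \<subseteq> snd p" by auto
  then obtain f where f: "\<forall>x::'a. open (fst (f x)) \<and> compact (snd (f x)) \<and> x \<in> fst (f x) \<and> fst (f x) \<subseteq> snd (f x)"
    using choice[of "\<lambda>x p. open (fst p) \<and> compact (snd p) \<and> x \<in> fst p \<and> fst p \<subseteq> snd p"] by blast
  define U where "U x = fst (f x)" for x
  define Kx where "Kx x = snd (f x)" for x
  have UK: "\<And>x. open (U x)" "\<And>x. compact (Kx x)" "\<And>x. x \<in> U x" "\<And>x. U x \<subseteq> Kx x"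
    using f unfolding U_def Kx_def by auto
  obtain X where X: "finite X" "\<And>p. \<exists>x\<in>X. \<exists>g\<in>carrier G. p \<in> \<phi> g ` U x"
    using cocompact_finite[OF cc, of U] UK by auto
  show ?thesis
  proof (intro exI conjI allI)
    show "compact (\<Union>x\<in>X. Kx x)" using X(1) UK(2) by (intro compact_UN) auto
    fix p
    obtain x g where "x \<in> X" "g \<in> carrier G" "p \<in> \<phi> g ` U x" using X(2) by blast
    then show "\<exists>g\<in>carrier G. \<exists>k\<in>\<Union>x\<in>X. Kx x. p = \<phi> g k" using UK(4) by blast
  qed
qed

end


context act begin
lemma conj_eq:
  assumes "g \<in> carrier G" "g' \<in> carrier G" "a \<in> carrier G" "inv g \<otimes> a \<otimes> g = inv g' \<otimes> a \<otimes> g'"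
  shows "g \<otimes> inv g' \<otimes> a = a \<otimes> (g \<otimes> inv g')"
proof -
  have "a \<otimes> (g \<otimes> inv g') = g \<otimes> (inv g \<otimes> a \<otimes> g) \<otimes> inv g'"
    using assms(1-3) by (simp add: m_assoc[symmetric] r_inv)
  also have "\<dots> = g \<otimes> (inv g' \<otimes> a \<otimes> g') \<otimes> inv g'" using assms(4) by simp
  also have "\<dots> = g \<otimes> inv g' \<otimes> a" using assms(1-3) by (simp add: m_assoc)
  finally show ?thesis by simp
qed
end

context hsetup begin

lemma LF: "\<exists>Gs. finite Gs \<and> Gs \<subseteq> carrier G \<and>
   (\<forall>g\<in>carrier G. F (\<phi> g y) \<le> R \<longrightarrow> (\<exists>z\<in>Z. \<exists>g'\<in>Gs. g = z \<otimes> g'))"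
proof -
  define B where "B = {c \<in> carrier G. dist (\<phi> c y) y \<le> R}"
  have Bfin: "finite B" unfolding B_def by (rule P1[OF H pr cc])
  define cj where "cj g = map (\<lambda>c. inv g \<otimes> c \<otimes> g) a0" for g
  define S where "S = {g \<in> carrier G. F (\<phi> g y) \<le> R}"
  have "cj ` S \<subseteq> {xs. set xs \<subseteq> B \<and> length xs = length a0}"
  proof
    fix l assume "l \<in> cj ` S"
    then obtain g where g: "g \<in> carrier G" "F (\<phi> g y) \<le> R" "l = cj g" unfolding S_def by auto
    have "inv g \<otimes> a0 ! i \<otimes> g \<in> B" if "i < length a0" for i
    proof -
      have "dist (\<phi> (inv g \<otimes> a0 ! i \<otimes> g) y) y \<le> F (\<phi> g y)"
        unfolding F_orbit[OF g(1)] using that by (intro member_le_sum) auto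
      then show ?thesis unfolding B_def using g a0i[OF that] by auto
    qed
    then show "l \<in> {xs. set xs \<subseteq> B \<and> length xs = length a0}"
      using g unfolding cj_def by (auto simp: in_set_conv_nth)
  qed
  then have cjfin: "finite (cj ` S)" using finite_lists_length_eq[OF Bfin] finite_subset by blast
  define rep where "rep l = (SOME g. g \<in> S \<and> cj g = l)" for l
  have rep: "rep (cj g) \<in> S \<and> cj (rep (cj g)) = cj g" if "g \<in> S" for g
    unfolding rep_def by (rule someI[of _ g]) (use that in auto)
  show ?thesis
  proof (intro exI conjI ballI impI)
    show "finite (rep ` cj ` S)" using cjfin by simp
    show "rep ` cj ` S \<subseteq> carrier G" using rep unfolding S_def by auto
    fix g assume g: "g \<in> carrier G" "F (\<phi> g y) \<le> R"
    then have gS: "g \<in> S" unfolding S_def by auto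
    define g' where "g' = rep (cj g)"
    have g'S: "g' \<in> S" and cjg: "cj g' = cj g" using rep[OF gS] g'_def by auto
    have g'c: "g' \<in> carrier G" using g'S S_def by auto
    have "g \<otimes> inv g' \<in> Z"
    proof -
      have "g \<otimes> inv g' \<otimes> a0 ! i = a0 ! i \<otimes> (g \<otimes> inv g')" if "i < length a0" for i
      proof (rule conj_eq[OF g(1) g'c a0i[OF that]])
        have "cj g ! i = cj g' ! i" using cjg by simp
        then show "inv g \<otimes> a0 ! i \<otimes> g = inv g' \<otimes> a0 ! i \<otimes> g'" using that unfolding cj_def by simp
      qed
      then show ?thesis unfolding Z_def using g g'c by auto
    qed
    moreover have "g = g \<otimes> inv g' \<otimes> g'" using g g'c by (simp add: m_assoc)
    ultimately show "\<exists>z\<in>Z. \<exists>g'\<in>rep ` cj ` S. g = z \<otimes> g'" using gS g'_def by blast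
  qed
qed

lemma KD: "\<exists>K D. compact K \<and> D \<ge> 0 \<and> (\<forall>k\<in>K. dist k y \<le> D) \<and> (\<forall>p. \<exists>g\<in>carrier G. \<exists>k\<in>K. p = \<phi> g k)"
proof -
  obtain K where K: "compact K" "\<forall>p. \<exists>g\<in>carrier G. \<exists>k\<in>K. p = \<phi> g k" using compact_K by blast
  obtain D where D: "\<forall>k\<in>K. dist y k \<le> D" using compact_imp_bounded[OF K(1)] bounded_any_center by blast
  show ?thesis
    by (rule exI[of _ K], rule exI[of _ "max D 0"]) (use K D in \<open>auto simp: dist_commute intro: le_max_iff_disj[THEN iffD2]\<close>)
qed

lemma Z_carrier: "z \<in> Z \<Longrightarrow> z \<in> carrier G" unfolding Z_def by auto

lemma gap: "\<exists>\<delta>>0. \<forall>u. (\<forall>c. F c \<le> F y \<longrightarrow> dist u c \<ge> 1/2) \<longrightarrow> F u \<ge> F y + \<delta>"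
proof -
  define R0 where "R0 = F y"
  obtain K D where KD: "compact K" "D \<ge> 0" "\<forall>k\<in>K. dist k y \<le> D" "\<forall>p. \<exists>g\<in>carrier G. \<exists>k\<in>K. p = \<phi> g k"
    using KD[of y] by (elim exE conjE) (rule that; assumption)
  obtain Gs where Gs: "finite Gs" "Gs \<subseteq> carrier G"
    "\<forall>g\<in>carrier G. F (\<phi> g y) \<le> R0 + 1 + 2 * length a0 * D \<longrightarrow> (\<exists>z\<in>Z. \<exists>g'\<in>Gs. g = z \<otimes> g')"
    using LF[where R="R0 + 1 + 2 * length a0 * D" and y=y] by blast
  define far where "far u \<longleftrightarrow> (\<forall>c. F c \<le> R0 \<longrightarrow> dist u c \<ge> 1/2)" for u
  define K' where "K' = (\<Union>g\<in>Gs. \<phi> g ` K)"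
  define Ss where "Ss = K' \<inter> (\<Inter>c\<in>{c. F c \<le> R0}. {u. 1/2 \<le> dist u c})"
  have K'c: "compact K'" unfolding K'_def using Gs(1,2) KD(1)
    by (intro compact_UN) (auto intro!: compact_continuous_image phi_cont)
  have Ssc: "compact Ss" unfolding Ss_def
    by (intro compact_Int_closed K'c closed_INT ballI closed_Collect_le continuous_on_const continuous_on_dist continuous_on_id)
  have Ss_far: "u \<in> Ss \<longleftrightarrow> u \<in> K' \<and> far u" for u unfolding Ss_def far_def by auto
  have red: "\<exists>v\<in>Ss. F v = F u" if "far u" "F u < R0 + 1" for u
  proof -
    obtain g k where gk: "g \<in> carrier G" "k \<in> K" "u = \<phi> g k" using KD(4) by blast
    have "F (\<phi> g y) \<le> F u + 2 * length a0 * dist (\<phi> g y) u" by (rule F_lip)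
    also have "dist (\<phi> g y) u = dist y k" using gk by simp
    finally have "F (\<phi> g y) \<le> R0 + 1 + 2 * length a0 * D"
      using that KD(3) gk(2) by (smt (verit, best) dist_commute mult_left_mono of_nat_0_le_iff)
    then obtain z g' where zg: "z \<in> Z" "g' \<in> Gs" "g = z \<otimes> g'" using Gs(3) gk(1) by blast
    have zc: "z \<in> carrier G" and g'c: "g' \<in> carrier G" using zg Gs(2) Z_carrier by auto
    define v where "v = \<phi> (inv z) u"
    have v: "v = \<phi> g' k" unfolding v_def using gk zg zc g'c by (simp add: phi_mult)
    have "v \<in> K'" unfolding K'_def using v zg gk by auto
    moreover have "far v" unfolding far_def
    proof (intro allI impI)
      fix c assume c: "F c \<le> R0"
      have "dist v c = dist u (\<phi> z c)" unfolding v_def using zc phi_dist[of z "\<phi> (inv z) u" c] by simp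
      moreover have "F (\<phi> z c) \<le> R0" using F_Z[OF zg(1)] c by simp
      ultimately show "dist v c \<ge> 1/2" using that(1) unfolding far_def by simp
    qed
    moreover have "F u = F v" unfolding v_def using F_Z[OF zg(1), of "\<phi> (inv z) u"] zc by simp
    ultimately show ?thesis using Ss_far by auto
  qed
  show ?thesis
  proof (cases "Ss = {}")
    case True
    show ?thesis
    proof (intro exI[of _ 1] conjI allI impI)
      fix u assume "\<forall>c. F c \<le> F y \<longrightarrow> 1/2 \<le> dist u c"
      then have "far u" unfolding far_def R0_def by simp
      then show "F y + 1 \<le> F u" using red True R0_def by force
    qed simp
  next
    case False
    obtain v where v: "v \<in> Ss" "\<forall>w\<in>Ss. F v \<le> F w"
      using continuous_attains_inf[OF Ssc False F_cont] by blast
    have "F v > R0"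
    proof (rule ccontr)
      assume "\<not> F v > R0"
      have "far v" using v(1) Ss_far by auto
      then have "dist v v \<ge> 1/2" using \<open>\<not> F v > R0\<close> unfolding far_def by (meson not_less)
      then show False by simp
    qed
    show ?thesis
    proof (intro exI[of _ "min 1 (F v - R0)"] conjI allI impI)
      show "min 1 (F v - R0) > 0" using \<open>F v > R0\<close> by simp
      fix u assume "\<forall>c. F c \<le> F y \<longrightarrow> 1/2 \<le> dist u c"
      then have fu: "far u" unfolding far_def R0_def by simp
      show "F y + min 1 (F v - R0) \<le> F u"
      proof (cases "F u < R0 + 1")
        case True
        then obtain w where "w \<in> Ss" "F w = F u" using red fu by blast
        then show ?thesis using v R0_def by force
      next
        case False then show ?thesis using R0_def by linarith
      qed
    qed
  qed
qed


lemma linear: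
  assumes dpos: "\<delta> > 0" and gapd: "\<forall>u. (\<forall>c. F c \<le> F y \<longrightarrow> dist u c \<ge> 1/2) \<longrightarrow> F u \<ge> F y + \<delta>"
  shows "\<exists>q. F q \<le> F y \<and> dist p q \<le> 1 + F p / \<delta>"
proof -
  define C where "C = {c. F c \<le> F y}"
  have "y \<in> C" unfolding C_def by simp
  then obtain q where q: "q \<in> C" "dist p q < infdist p C + 1/2"
    using near_point[of C "1/2" p] by auto
  have Fpd: "F p / \<delta> \<ge> 0" using F_nonneg dpos by simp
  show ?thesis
  proof (cases "dist p q \<le> 1")
    case True then show ?thesis using q(1) Fpd unfolding C_def by (intro exI[of _ q]) auto
  next
    case False
    define L where "L = dist q p"
    have L1: "L > 1" using False unfolding L_def by (simp add: dist_commute)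
    obtain \<gamma> where \<gamma>: "geodesic_path \<gamma> q p" using H unfolding hadamard_space_def by blast
    define t where "t = 1 / L"
    have t: "0 \<le> t" "t \<le> 1" using L1 unfolding t_def by auto
    have tL: "t * dist q p = 1" using L1 unfolding t_def L_def by (cases "q = p") auto
    define u where "u = \<gamma> 1"
    have "dist u p = \<bar>1 - L\<bar>"
    proof -
      have "\<gamma> (dist q p) = p" using \<gamma> unfolding geodesic_path_def by simp
      then show ?thesis unfolding u_def using geo_dist[OF \<gamma>, of 1 "dist q p"] L1 L_def by simp
    qed
    then have dup: "dist u p = L - 1" using L1 by simp
    have "\<forall>c. F c \<le> F y \<longrightarrow> dist u c \<ge> 1/2"
    proof (intro allI impI)
      fix c assume "F c \<le> F y"
      then have "infdist p C \<le> dist p c" unfolding C_def by (intro infdist_le) simp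
      moreover have "dist p c \<le> dist p u + dist u c" by (rule dist_triangle)
      ultimately show "dist u c \<ge> 1/2" using q(2) dup L_def by (simp add: dist_commute)
    qed
    then have Fu: "F u \<ge> F y + \<delta>" using gapd by blast
    have "F u \<le> (1 - t) * F q + t * F p" using F_conv[OF \<gamma> t] tL u_def by simp
    also have "\<dots> \<le> (1 - t) * F y + t * F p" using q(1) t unfolding C_def by (simp add: mult_left_mono)
    finally have "\<delta> \<le> t * (F p - F y)" using Fu by (simp add: algebra_simps)
    also have "\<dots> \<le> t * F p" using t F_nonneg[of y] by (simp add: mult_left_mono)
    finally have "\<delta> * L \<le> F p" using L1 unfolding t_def by (simp add: field_simps)
    then have "L \<le> F p / \<delta>" using dpos by (simp add: field_simps)
    then show ?thesis using q(1) unfolding C_def L_def by (intro exI[of _ q]) (simp add: dist_commute)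
  qed
qed

lemma KL: "\<exists>A B Gs. A \<ge> 0 \<and> B \<ge> 0 \<and> finite Gs \<and> Gs \<subseteq> carrier G \<and>
   (\<forall>h\<in>carrier G. \<exists>z\<in>Z. \<exists>g'\<in>Gs. dist (\<phi> h y) (\<phi> (z \<otimes> g') y) \<le> A * F (\<phi> h y) + B)"
proof -
  obtain \<delta> where dpos: "\<delta> > 0" and gapd: "\<forall>u. (\<forall>c. F c \<le> F y \<longrightarrow> dist u c \<ge> 1/2) \<longrightarrow> F u \<ge> F y + \<delta>"
    using gap[of y] by (elim exE conjE) (rule that; assumption)
  obtain K D where KD: "compact K" "D \<ge> 0" "\<forall>k\<in>K. dist k y \<le> D" "\<forall>p. \<exists>g\<in>carrier G. \<exists>k\<in>K. p = \<phi> g k"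
    using KD[of y] by (elim exE conjE) (rule that; assumption)
  obtain Gs where Gs: "finite Gs" "Gs \<subseteq> carrier G"
    "\<forall>g\<in>carrier G. F (\<phi> g y) \<le> F y + 2 * length a0 * D \<longrightarrow> (\<exists>z\<in>Z. \<exists>g'\<in>Gs. g = z \<otimes> g')"
    using LF[where R="F y + 2 * length a0 * D" and y=y] by blast
  show ?thesis
  proof (rule exI[of _ "1/\<delta>"], rule exI[of _ "1 + D"], rule exI[of _ Gs], intro conjI ballI)
    show "1/\<delta> \<ge> 0" "1 + D \<ge> 0" using dpos KD(2) by auto
    show "finite Gs" "Gs \<subseteq> carrier G" using Gs by auto
    fix h assume hc: "h \<in> carrier G"
    obtain q where q: "F q \<le> F y" "dist (\<phi> h y) q \<le> 1 + F (\<phi> h y) / \<delta>"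
      using linear[OF dpos gapd, of "\<phi> h y"] by blast
    obtain g k where gk: "g \<in> carrier G" "k \<in> K" "q = \<phi> g k" using KD(4) by meson
    have dq: "dist q (\<phi> g y) \<le> D" using gk KD(3) by simp
    have "F (\<phi> g y) \<le> F q + 2 * length a0 * dist (\<phi> g y) q" by (rule F_lip)
    also have "\<dots> \<le> F y + 2 * length a0 * D"
      using q(1) dq by (simp add: dist_commute mult_left_mono add_mono)
    finally have Fg: "F (\<phi> g y) \<le> F y + 2 * length a0 * D" .
    obtain z g' where zg: "z \<in> Z" "g' \<in> Gs" "g = z \<otimes> g'" using Gs(3) gk(1) Fg by blast
    have "dist (\<phi> h y) (\<phi> g y) \<le> dist (\<phi> h y) q + dist q (\<phi> g y)" by (rule dist_triangle)
    also have "\<dots> \<le> 1/\<delta> * F (\<phi> h y) + (1 + D)" using q(2) dq by simp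
    finally show "\<exists>z\<in>Z. \<exists>g'\<in>Gs. dist (\<phi> h y) (\<phi> (z \<otimes> g') y) \<le> 1/\<delta> * F (\<phi> h y) + (1 + D)"
      using zg by blast
  qed
qed


end

context act begin

lemma cancel1[simp]: "x \<in> carrier G \<Longrightarrow> y \<in> carrier G \<Longrightarrow> x \<otimes> (inv x \<otimes> y) = y"
  by (simp add: m_assoc[symmetric])

lemma cancel2[simp]: "x \<in> carrier G \<Longrightarrow> y \<in> carrier G \<Longrightarrow> inv x \<otimes> (x \<otimes> y) = y"
  by (simp add: m_assoc[symmetric])

lemma comm_inv: assumes "z \<in> carrier G" "c \<in> carrier G" "z \<otimes> c = c \<otimes> z" shows "inv z \<otimes> c = c \<otimes> inv z"
proof -
  have "inv z \<otimes> c = inv z \<otimes> (c \<otimes> z) \<otimes> inv z" using assms(1,2) by (simp add: m_assoc)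
  also have "\<dots> = inv z \<otimes> (z \<otimes> c) \<otimes> inv z" using assms(3) by simp
  also have "\<dots> = c \<otimes> inv z" using assms(1,2) by (simp add: m_assoc)
  finally show ?thesis .
qed

lemma conj_main:
  assumes c: "h \<in> carrier G" "k \<in> carrier G" "w \<in> carrier G" "c \<in> carrier G" and wc: "w \<otimes> c = c \<otimes> w"
  shows "inv (inv h \<otimes> w \<otimes> k) \<otimes> (inv h \<otimes> c \<otimes> h) \<otimes> (inv h \<otimes> w \<otimes> k) = inv k \<otimes> c \<otimes> k"
proof -
  have "inv (inv h \<otimes> w \<otimes> k) = inv k \<otimes> (inv w \<otimes> h)" using c by (simp add: inv_mult_group)
  then have "inv (inv h \<otimes> w \<otimes> k) = inv k \<otimes> inv w \<otimes> h" using c by (simp add: m_assoc)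
  then have "inv (inv h \<otimes> w \<otimes> k) \<otimes> (inv h \<otimes> c \<otimes> h) \<otimes> (inv h \<otimes> w \<otimes> k)
      = inv k \<otimes> inv w \<otimes> (h \<otimes> inv h) \<otimes> c \<otimes> (h \<otimes> inv h) \<otimes> w \<otimes> k"
    using c by (simp add: m_assoc)
  also have "\<dots> = inv k \<otimes> (inv w \<otimes> (c \<otimes> w)) \<otimes> k" using c by (simp add: m_assoc)
  also have "\<dots> = inv k \<otimes> (inv w \<otimes> (w \<otimes> c)) \<otimes> k" using wc by simp
  also have "\<dots> = inv k \<otimes> c \<otimes> k" using c by (simp add: m_assoc[symmetric])
  finally show ?thesis .
qed

end

context hsetup begin

lemma main_loc: "\<exists>Cstar C. Cstar \<ge> 0 \<and> C \<ge> 0 \<and>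
    (\<forall>a b. conj_lists G a0 a \<and> conj_lists G a b \<longrightarrow>
       (\<exists>g\<in>carrier G. conj_by G g a b \<and>
          orbit_dist \<phi> y g \<one>
            \<le> Cstar * (\<Sum>i<length a. orbit_dist \<phi> y (a ! i) \<one> + orbit_dist \<phi> y (b ! i) \<one>) + C))"
proof -
  obtain A B Gs where AB: "A \<ge> 0" "B \<ge> 0" "finite Gs" "Gs \<subseteq> carrier G"
    "\<forall>h\<in>carrier G. \<exists>z\<in>Z. \<exists>g'\<in>Gs. dist (\<phi> h y) (\<phi> (z \<otimes> g') y) \<le> A * F (\<phi> h y) + B"
    using KL[of y] by (elim exE conjE) (rule that; assumption)
  define M where "M = (\<Sum>p\<in>Gs \<times> Gs. dist (\<phi> (snd p) y) (\<phi> (fst p) y))"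
  have M: "dist (\<phi> g2 y) (\<phi> g1 y) \<le> M" if "g1 \<in> Gs" "g2 \<in> Gs" for g1 g2
  proof -
    have "dist (\<phi> (snd (g1, g2)) y) (\<phi> (fst (g1, g2)) y) \<le> M"
      unfolding M_def using that AB(3) by (intro member_le_sum) auto
    then show ?thesis by simp
  qed
  have M0: "M \<ge> 0" unfolding M_def by (simp add: sum_nonneg)
  show ?thesis
  proof (rule exI[of _ A], rule exI[of _ "2 * B + M"], intro conjI allI impI)
    show "A \<ge> 0" "2 * B + M \<ge> 0" using AB M0 by auto
    fix a b assume ab: "conj_lists G a0 a \<and> conj_lists G a b"
    have "\<exists>g\<in>carrier G. conj_by G g a0 a" using ab unfolding conj_lists_def by simp
    then obtain h where h: "h \<in> carrier G" "conj_by G h a0 a" by (elim bexE) (rule that; assumption)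
    have "\<exists>g\<in>carrier G. conj_by G g a b" using ab unfolding conj_lists_def by simp
    then obtain k' where k': "k' \<in> carrier G" "conj_by G k' a b" by (elim bexE) (rule that; assumption)
    define k where "k = h \<otimes> k'"
    have kc: "k \<in> carrier G" using h k' k_def by simp
    have len: "length a = length a0" "length b = length a0" using h(2) k'(2) unfolding conj_by_def by auto
    have ai: "a ! i = inv h \<otimes> a0 ! i \<otimes> h" if "i < length a0" for i
      using h(2) that unfolding conj_by_def by auto
    have bi: "b ! i = inv k \<otimes> a0 ! i \<otimes> k" if "i < length a0" for i
    proof -
      have "b ! i = inv k' \<otimes> (inv h \<otimes> a0 ! i \<otimes> h) \<otimes> k'" using k'(2) that len ai[OF that] unfolding conj_by_def by auto
      also have "\<dots> = inv k \<otimes> a0 ! i \<otimes> k" unfolding k_def using h k' a0i[OF that] by (simp add: inv_mult_group m_assoc)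
      finally show ?thesis .
    qed
    obtain z1 g1 where zg1: "z1 \<in> Z" "g1 \<in> Gs" "dist (\<phi> h y) (\<phi> (z1 \<otimes> g1) y) \<le> A * F (\<phi> h y) + B"
      using bspec[OF AB(5) h(1)] by (elim bexE) (rule that; assumption)
    obtain z2 g2 where zg2: "z2 \<in> Z" "g2 \<in> Gs" "dist (\<phi> k y) (\<phi> (z2 \<otimes> g2) y) \<le> A * F (\<phi> k y) + B"
      using bspec[OF AB(5) kc] by (elim bexE) (rule that; assumption)
    have z1c: "z1 \<in> carrier G" and z2c: "z2 \<in> carrier G" and g1c: "g1 \<in> carrier G" and g2c: "g2 \<in> carrier G"
      using zg1 zg2 AB(4) Z_carrier by auto
    define w where "w = z1 \<otimes> inv z2"
    have wc: "w \<in> carrier G" using z1c z2c w_def by simp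
    define g where "g = inv h \<otimes> w \<otimes> k"
    have gc: "g \<in> carrier G" using h wc kc g_def by simp
    have wcomm: "w \<otimes> a0 ! i = a0 ! i \<otimes> w" if "i < length a0" for i
    proof -
      have c: "a0 ! i \<in> carrier G" using a0i[OF that] .
      have 1: "z1 \<otimes> a0 ! i = a0 ! i \<otimes> z1" using zg1(1) that unfolding Z_def by auto
      have 2: "inv z2 \<otimes> a0 ! i = a0 ! i \<otimes> inv z2" using zg2(1) that z2c c comm_inv unfolding Z_def by auto
      have "w \<otimes> a0 ! i = z1 \<otimes> (inv z2 \<otimes> a0 ! i)" unfolding w_def using z1c z2c c by (simp add: m_assoc)
      also have "\<dots> = (z1 \<otimes> a0 ! i) \<otimes> inv z2" using 2 z1c z2c c by (simp add: m_assoc)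
      also have "\<dots> = a0 ! i \<otimes> w" using 1 z1c z2c c unfolding w_def by (simp add: m_assoc)
      finally show ?thesis .
    qed
    have conj: "conj_by G g a b"
      unfolding conj_by_def
    proof (intro conjI allI impI)
      show "length a = length b" using len by simp
      fix i assume "i < length a"
      then have i: "i < length a0" using len by simp
      show "b ! i = inv g \<otimes> a ! i \<otimes> g"
        unfolding ai[OF i] bi[OF i] g_def using conj_main[OF h(1) kc wc a0i[OF i] wcomm[OF i]] by simp
    qed
    have dist_eq: "orbit_dist \<phi> y g \<one> = dist (\<phi> z1 (\<phi> (inv z2) (\<phi> k y))) (\<phi> h y)"
    proof -
      have "\<phi> g y = \<phi> (inv h) (\<phi> z1 (\<phi> (inv z2) (\<phi> k y)))"
        unfolding g_def w_def using h z1c z2c kc by (simp add: phi_mult)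
      then have "dist (\<phi> g y) y = dist (\<phi> h (\<phi> g y)) (\<phi> h y)" using h phi_dist[of h "\<phi> g y" y] by simp
      then show ?thesis unfolding orbit_dist_def using h \<open>\<phi> g y = _\<close> by simp
    qed
    have T1: "dist (\<phi> z1 (\<phi> (inv z2) (\<phi> k y))) (\<phi> z1 (\<phi> g2 y)) \<le> A * F (\<phi> k y) + B"
    proof -
      have "dist (\<phi> z1 (\<phi> (inv z2) (\<phi> k y))) (\<phi> z1 (\<phi> g2 y)) = dist (\<phi> (inv z2) (\<phi> k y)) (\<phi> g2 y)"
        using z1c by simp
      also have "\<dots> = dist (\<phi> z2 (\<phi> (inv z2) (\<phi> k y))) (\<phi> z2 (\<phi> g2 y))"
        using z2c phi_dist[of z2 "\<phi> (inv z2) (\<phi> k y)" "\<phi> g2 y"] by simp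
      also have "\<dots> = dist (\<phi> k y) (\<phi> (z2 \<otimes> g2) y)" using z2c g2c by (simp add: phi_mult)
      finally show ?thesis using zg2(3) by simp
    qed
    have T2: "dist (\<phi> z1 (\<phi> g2 y)) (\<phi> z1 (\<phi> g1 y)) \<le> M" using z1c M[OF zg1(2) zg2(2)] by simp
    have T3: "dist (\<phi> z1 (\<phi> g1 y)) (\<phi> h y) \<le> A * F (\<phi> h y) + B"
      using zg1(3) z1c g1c by (simp add: phi_mult dist_commute)
    have sum_eq: "(\<Sum>i<length a. orbit_dist \<phi> y (a ! i) \<one> + orbit_dist \<phi> y (b ! i) \<one>) = F (\<phi> h y) + F (\<phi> k y)"
    proof -
      have "(\<Sum>i<length a. orbit_dist \<phi> y (a ! i) \<one> + orbit_dist \<phi> y (b ! i) \<one>)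
          = (\<Sum>i<length a0. dist (\<phi> (inv h \<otimes> a0 ! i \<otimes> h) y) y + dist (\<phi> (inv k \<otimes> a0 ! i \<otimes> k) y) y)"
        unfolding orbit_dist_def len using ai bi by (intro sum.cong) auto
      then show ?thesis unfolding F_orbit[OF h(1)] F_orbit[OF kc] by (simp add: sum.distrib)
    qed
    have "orbit_dist \<phi> y g \<one> \<le> A * F (\<phi> k y) + B + M + (A * F (\<phi> h y) + B)"
      unfolding dist_eq using T1 T2 T3
        dist_triangle[of "\<phi> z1 (\<phi> (inv z2) (\<phi> k y))" "\<phi> h y" "\<phi> z1 (\<phi> g2 y)"]
        dist_triangle[of "\<phi> z1 (\<phi> g2 y)" "\<phi> h y" "\<phi> z1 (\<phi> g1 y)"] by linarith
    also have "\<dots> = A * (\<Sum>i<length a. orbit_dist \<phi> y (a ! i) \<one> + orbit_dist \<phi> y (b ! i) \<one>) + (2 * B + M)"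
      unfolding sum_eq by (simp add: algebra_simps)
    finally have fin: "orbit_dist \<phi> y g \<one>
        \<le> A * (\<Sum>i<length a. orbit_dist \<phi> y (a ! i) \<one> + orbit_dist \<phi> y (b ! i) \<one>) + (2 * B + M)" .
    show "\<exists>g\<in>carrier G. conj_by G g a b \<and> orbit_dist \<phi> y g \<one>
        \<le> A * (\<Sum>i<length a. orbit_dist \<phi> y (a ! i) \<one> + orbit_dist \<phi> y (b ! i) \<one>) + (2 * B + M)"
      using conj fin gc by (intro bexI[of _ g] conjI)
  qed
qed

end

theorem lemma4:
  fixes G :: "('g, 'b) monoid_scheme" and \<phi> :: "'g \<Rightarrow> 'a::metric_space \<Rightarrow> 'a"
    and y :: 'a and a0 :: "'g list"
  assumes "hadamard_space TYPE('a)"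
    and "locally_compact_space (euclidean :: 'a topology)"
    and "group G"
    and "isometric_action G \<phi>"
    and "proper_action G \<phi>"
    and "cocompact_action G \<phi>"
    and "set a0 \<subseteq> carrier G"
  shows "\<exists>Cstar C. Cstar \<ge> 0 \<and> C \<ge> 0 \<and>
    (\<forall>a b. conj_lists G a0 a \<and> conj_lists G a b \<longrightarrow>
       (\<exists>g\<in>carrier G. conj_by G g a b \<and>
          orbit_dist \<phi> y g \<one>\<^bsub>G\<^esub>
            \<le> Cstar * (\<Sum>i<length a. orbit_dist \<phi> y (a ! i) \<one>\<^bsub>G\<^esub> + orbit_dist \<phi> y (b ! i) \<one>\<^bsub>G\<^esub>) + C))"
  proof -
  interpret hsetup G \<phi> a0
    by (intro hsetup.intro act.intro hsetup_axioms.intro act_axioms.intro assms)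
  show ?thesis by (rule main_loc)
qed

end
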